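(* Let $n>1$ be an integer and $S=S_1\cup S_2\subseteq U_{6n}$ with $S_1=\langle a^2\rangle\setminus\{1\}$ and $S_2=\{a^{2r+1},\ a^{2r+1}b\mid 0\le r\le n-1\}$. Then $\mathrm{Cay}(U_{6n},S)$ is a connected integral graph whose spectrum (eigenvalues with multiplicities) is $\{[-n-1]^1,[-1]^{6n-4},[2n-1]^2,[3n-1]^1\}$.
   Context: For an integer $n\ge1$, $U_{6n}=\langle a,b\mid a^{2n}=b^3=1,\ a^{-1}ba=b^{-1}\rangle$, a group of order $6n$. For a group $G$ and $S\subseteq G$ with $1\notin S=S^{-1}$, the Cayley graph $\mathrm{Cay}(G,S)$ has vertex set $G$ and edges $\{g,sg\}$ for $g\in G,s\in S$. A graph is integral if all eigenvalues of its adjacency matrix are integers. $[\lambda]^m$ denotes eigenvalue $\lambda$ with multiplicity $m$. *)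

theory Defs
  imports "HOL-Algebra.Group" "Jordan_Normal_Form.Char_Poly"
begin

text \<open>Concrete model of U_{6n} = <a,b | a^(2n) = b^3 = 1, a^-1 b a = b^-1>.
  The pair (i,j) with i < 2n, j < 3 stands for a^i b^j.  Since b^j a^k = a^k b^((-1)^k j),
  (a^i b^j)(a^k b^l) = a^(i+k) b^((-1)^k j + l).\<close>

definition U :: "nat \<Rightarrow> (nat \<times> nat) monoid" where
  "U n = \<lparr> carrier = {0..<2*n} \<times> {0..<3},
           mult = (\<lambda>(i,j) (k,l). ((i + k) mod (2*n),
                     ((if even k then j else (3 - j) mod 3) + l) mod 3)),
           one = (0, 0) \<rparr>"

definition gen_a :: "nat \<times> nat" where "gen_a = (1, 0)"
definition gen_b :: "nat \<times> nat" where "gen_b = (0, 1)"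

definition cay_adj :: "('a, 'b) monoid_scheme \<Rightarrow> 'a set \<Rightarrow> 'a \<Rightarrow> 'a \<Rightarrow> bool" where
  "cay_adj G S g h \<longleftrightarrow> g \<in> carrier G \<and> h \<in> carrier G \<and>
      ((\<exists>s\<in>S. h = s \<otimes>\<^bsub>G\<^esub> g) \<or> (\<exists>s\<in>S. g = s \<otimes>\<^bsub>G\<^esub> h))"

definition cay_connected :: "('a, 'b) monoid_scheme \<Rightarrow> 'a set \<Rightarrow> bool" where
  "cay_connected G S \<longleftrightarrow>
     (\<forall>g\<in>carrier G. \<forall>h\<in>carrier G. (g, h) \<in> {(x, y). cay_adj G S x y}\<^sup>*)"

definition U_vertex :: "nat \<Rightarrow> nat \<times> nat" where
  "U_vertex k = (k div 3, k mod 3)"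

definition U_adj_matrix :: "nat \<Rightarrow> (nat \<times> nat) set \<Rightarrow> complex mat" where
  "U_adj_matrix n S = mat (6*n) (6*n)
     (\<lambda>(p, q). if cay_adj (U n) S (U_vertex p) (U_vertex q) then 1 else 0)"

end

theory Submission
  imports Defs
begin


definition Bf :: "nat \<Rightarrow> nat \<Rightarrow> bool" where
 "Bf c d = (let e = c div 3; j = c mod 3; e' = d div 3; j' = d mod 3 in
    (e = e' \<and> j = j') \<or> (e = 0 \<and> e' = 1 \<and> (j' = j \<or> j' = (j+1) mod 3))
     \<or> (e = 1 \<and> e' = 0 \<and> (j = j' \<or> j = (j'+1) mod 3)))"

definition Rel :: "nat \<times> nat \<Rightarrow> nat \<times> nat \<Rightarrow> bool" where
 "Rel g h = (case g of (i,j) \<Rightarrow> case h of (i',j') \<Rightarrow> (i,j) \<noteq> (i',j') \<and>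
    ((even i = even i' \<and> j = j') \<or> (even i \<and> odd i' \<and> (j' = j \<or> j' = (j+1) mod 3))
      \<or> (odd i \<and> even i' \<and> (j = j' \<or> j = (j'+1) mod 3))))"

lemma Rel_sym: "Rel g h = Rel h g"
  unfolding Rel_def by (cases g; cases h) auto

lemma mult_U: "(i,j) \<otimes>\<^bsub>U n\<^esub> (k,l) = ((i+k) mod (2*n), ((if even k then j else (3-j) mod 3)+l) mod 3)"
  by (simp add: U_def)

lemma carrier_U: "carrier (U n) = {0..<2*n} \<times> {0..<3}" by (simp add: U_def)

lemma pow_a: "gen_a [^]\<^bsub>U n\<^esub> k = (k mod (2*n), 0)"
proof (induction k)
  case 0 then show ?case by (simp add: U_def)
next
  case (Suc k) then show ?case by (simp add: gen_a_def mult_U mod_Suc_eq)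
qed

lemma modfact: "x < 2*(n::nat) \<Longrightarrow> i < 2*n \<Longrightarrow> (x+i) mod (2*n) = (if x+i < 2*n then x+i else x+i-2*n)"
  by (simp add: le_mod_geq)

lemma S_eq:
  fixes n :: nat and S1 S2 S :: "(nat \<times> nat) set"
  assumes "n > 1"
    and "S1 = {gen_a [^]\<^bsub>U n\<^esub> (2 * k) | k. k \<in> (UNIV :: nat set)} - {\<one>\<^bsub>U n\<^esub>}"
    and "S2 = {gen_a [^]\<^bsub>U n\<^esub> (2 * r + 1) | r. r \<le> n - 1}
            \<union> {gen_a [^]\<^bsub>U n\<^esub> (2 * r + 1) \<otimes>\<^bsub>U n\<^esub> gen_b | r. r \<le> n - 1}"
    and "S = S1 \<union> S2"
  shows "S = {(x,0::nat)| x. x < 2*n \<and> even x \<and> x \<noteq> 0} \<union> {(x,y::nat) | x y. x < 2*n \<and> odd x \<and> y \<le> 1}"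
proof -
  have one: "\<one>\<^bsub>U n\<^esub> = (0,0)" by (simp add: U_def)
  have e1: "S1 = {(x,0::nat)| x. x < 2*n \<and> even x \<and> x \<noteq> 0}"
  proof -
    have "{gen_a [^]\<^bsub>U n\<^esub> (2 * k) | k. k \<in> (UNIV :: nat set)} = {(x,0::nat)| x. x < 2*n \<and> even x}"
    proof (intro Set.set_eqI iffI)
      fix z assume "z \<in> {gen_a [^]\<^bsub>U n\<^esub> (2 * k) | k. k \<in> (UNIV :: nat set)}"
      then obtain k where "z = ((2*k) mod (2*n), 0)" by (auto simp: pow_a)
      moreover have "(2*k) mod (2*n) < 2*n" using assms(1) by simp
      moreover have "even ((2*k) mod (2*n))" by (simp add: mod_mult_mult1) 
      ultimately show "z \<in> {(x,0::nat)| x. x < 2*n \<and> even x}" by auto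
    next
      fix z assume "z \<in> {(x,0::nat)| x. x < 2*n \<and> even x}"
      then obtain x where x: "z = (x,0::nat)" "x < 2*n" "even x" by auto
      then have "z = gen_a [^]\<^bsub>U n\<^esub> (2 * (x div 2))" by (simp add: pow_a)
      then show "z \<in> {gen_a [^]\<^bsub>U n\<^esub> (2 * k) | k. k \<in> (UNIV :: nat set)}" by blast
    qed
    then show ?thesis using assms(2) one by auto
  qed
  have e2: "S2 = {(x,y::nat) | x y. x < 2*n \<and> odd x \<and> y \<le> 1}"
  proof (intro Set.set_eqI iffI)
    fix z assume "z \<in> S2"
    then obtain r where r: "r \<le> n - 1" "z = gen_a [^]\<^bsub>U n\<^esub> (2 * r + 1) \<or> z = gen_a [^]\<^bsub>U n\<^esub> (2 * r + 1) \<otimes>\<^bsub>U n\<^esub> gen_b"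
      using assms(3) by auto
    have lt: "2*r+1 < 2*n" using r(1) assms(1) by linarith
    then have "z = (2*r+1, 0) \<or> z = (2*r+1, 1)" using r(2) by (auto simp del: nat_pow_Suc simp: pow_a gen_b_def mult_U)
    then show "z \<in> {(x,y::nat) | x y. x < 2*n \<and> odd x \<and> y \<le> 1}" using lt by auto
  next
    fix z assume "z \<in> {(x,y::nat) | x y. x < 2*n \<and> odd x \<and> y \<le> 1}"
    then obtain x y where xy: "z = (x,y)" "x < 2*n" "odd x" "y \<le> 1" by auto
    define r where "r = x div 2"
    have r: "x = 2*r+1" "r \<le> n - 1" using xy unfolding r_def by (auto elim!: oddE)
    have a: "gen_a [^]\<^bsub>U n\<^esub> (2 * r + 1) = (x, 0)" using r xy by (simp del: nat_pow_Suc add: pow_a)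
    have b: "gen_a [^]\<^bsub>U n\<^esub> (2 * r + 1) \<otimes>\<^bsub>U n\<^esub> gen_b = (x, 1)" using r xy by (simp del: nat_pow_Suc add: pow_a gen_b_def mult_U)
    show "z \<in> S2"
    proof (cases "y = 0")
      case True then show ?thesis using a r xy assms(3) by auto
    next
      case False then have "y = 1" using xy by auto
      then show ?thesis using b r xy assms(3) by auto
    qed
  qed
  show ?thesis using e1 e2 assms(4) by simp
qed



definition Sx :: "nat \<Rightarrow> (nat \<times> nat) set" where
  "Sx n = {(x,0::nat)| x. x < 2*n \<and> even x \<and> x \<noteq> 0} \<union> {(x,y::nat) | x y. x < 2*n \<and> odd x \<and> y \<le> 1}"

lemma left_adj1:
  assumes "i < 2*n" "j < 3" "i' < 2*n" "j' < 3" "s \<in> Sx n" "(i',j') = s \<otimes>\<^bsub>U n\<^esub> (i,j)"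
  shows "Rel (i,j) (i',j')"
proof -
  obtain x y where s: "s = (x,y)" by (cases s)
  have x: "x < 2*n" "y \<le> 1" "(even x \<and> x \<noteq> 0 \<and> y = 0) \<or> odd x" using assms(5) s by (auto simp: Sx_def)
  have i': "i' = (if x+i < 2*n then x+i else x+i-2*n)" using assms(6) s x(1) assms(1) by (simp add: mult_U modfact)
  have j': "j' = ((if even i then y else (3-y) mod 3) + j) mod 3" using assms(6) s by (simp add: mult_U)
  have ev: "even i' = (even i = even x)" using i' x(1) assms(1) by (cases "x + i < 2*n") auto
  show ?thesis
  proof (cases "even x")
    case True
    then have "y = 0" "x \<noteq> 0" using x by auto
    then have "j' = j" using j' assms(2) by auto
    moreover have "i' \<noteq> i" using i' \<open>x \<noteq> 0\<close> x(1) by (cases "x + i < 2*n") auto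
    moreover have "even i' = even i" using ev True by simp
    ultimately show ?thesis by (simp add: Rel_def)
  next
    case False
    have ne: "even i' \<noteq> even i" using ev False by simp
    then have nei: "i \<noteq> i'" by auto
    have y01: "y = 0 \<or> y = 1" using x by auto
    have j012: "j = 0 \<or> j = 1 \<or> j = 2" using assms(2) by auto
    show ?thesis
    proof (cases "even i")
      case True
      then have "j' = (y + j) mod 3" using j' by simp
      then have "j' = j \<or> j' = (j+1) mod 3" using y01 j012 by auto
      then show ?thesis using True ne nei by (simp add: Rel_def)
    next
      case False
      then have "j' = ((3-y) mod 3 + j) mod 3" using j' by simp
      then have "j = j' \<or> j = (j'+1) mod 3" using y01 j012 by auto
      then show ?thesis using False ne nei by (simp add: Rel_def)
    qed
  qed
qed

lemma left_adj2:
  assumes "i < 2*n" "j < 3" "i' < 2*n" "j' < 3" "Rel (i,j) (i',j')"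
  shows "\<exists>s\<in>Sx n. (i',j') = s \<otimes>\<^bsub>U n\<^esub> (i,j)"
proof -
  define x where "x = (if i \<le> i' then i' - i else i' + 2*n - i)"
  have x: "x < 2*n \<and> (x + i) mod (2*n) = i' \<and> (even x = (even i = even i')) \<and> (x = 0 \<longleftrightarrow> i = i')"
  proof (cases "i \<le> i'")
    case True
    then have xe: "x = i' - i" by (simp add: x_def)
    have "x + i = i'" using True xe by simp
    moreover have "even (i' - i) = (even i = even i')" using True by presburger
    ultimately show ?thesis using xe assms(3) True by auto
  next
    case False
    then have xe: "x = i' + 2*n - i" by (simp add: x_def)
    have "x + i = i' + 2*n" using False xe assms(1) by simp
    then have "(x + i) mod (2*n) = i'" using assms(3) by simp
    moreover have "even (i' + 2*n - i) = (even i = even i')" using False assms(1) by presburger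
    ultimately show ?thesis using xe assms(1,3) False by auto
  qed
  have R: "(i,j) \<noteq> (i',j')"
    "(even i = even i' \<and> j = j') \<or> (even i \<and> odd i' \<and> (j' = j \<or> j' = (j+1) mod 3))
      \<or> (odd i \<and> even i' \<and> (j = j' \<or> j = (j'+1) mod 3))" using assms(5) by (auto simp: Rel_def)
  show ?thesis
  proof (cases "even i = even i'")
    case True
    then have "j = j'" "i \<noteq> i'" using R by auto
    have "(x,0) \<in> Sx n" using x True \<open>i \<noteq> i'\<close> unfolding Sx_def by blast
    moreover have "(i',j') = (x,0) \<otimes>\<^bsub>U n\<^esub> (i,j)" using x \<open>j = j'\<close> assms(2) by (simp add: mult_U)
    ultimately show ?thesis by blast
  next
    case False
    define y where "y = (if j = j' then 0 else 1::nat)"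
    have "y \<le> 1" "odd x" using x False by (auto simp: y_def)
    then have "(x,y) \<in> Sx n" using x unfolding Sx_def by blast
    moreover have "j = 0 \<or> j = 1 \<or> j = 2" "j' = 0 \<or> j' = 1 \<or> j' = 2" using assms(2,4) by auto
    have jj: "j = 0 \<or> j = 1 \<or> j = 2" "j' = 0 \<or> j' = 1 \<or> j' = 2" using assms(2,4) by auto
    have RR: "even i \<longrightarrow> j' = j \<or> j' = (j+1) mod 3" "odd i \<longrightarrow> j = j' \<or> j = (j'+1) mod 3"
      using R(2) False by auto
    have "j' = ((if even i then y else (3-y) mod 3) + j) mod 3"
    proof (cases "j = j'")
      case True then show ?thesis using assms(4) by (simp add: y_def)
    next
      case False
      then have y1: "y = 1" by (simp add: y_def)
      show ?thesis
      proof (cases "even i")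
        case True
        then have "j' = (j+1) mod 3" using RR False by auto
        then show ?thesis using True y1 by simp
      next
        case odd: False
        then have "j = (j'+1) mod 3" using RR False by auto
        then have "j' = ((3 - 1) mod 3 + j) mod 3" using assms(4) by presburger
        then show ?thesis using odd y1 by simp
      qed
    qed
    then have "(i',j') = (x,y) \<otimes>\<^bsub>U n\<^esub> (i,j)" using x by (simp add: mult_U)
    ultimately show ?thesis by blast
  qed
qed

lemma adj_char:
  assumes "i < 2*n" "j < 3" "i' < 2*n" "j' < 3" "S = Sx n"
  shows "cay_adj (U n) S (i,j) (i',j') \<longleftrightarrow> Rel (i,j) (i',j')"
proof
  assume "cay_adj (U n) S (i,j) (i',j')"
  then have "(\<exists>s\<in>S. (i',j') = s \<otimes>\<^bsub>U n\<^esub> (i,j)) \<or> (\<exists>s\<in>S. (i,j) = s \<otimes>\<^bsub>U n\<^esub> (i',j'))"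
    by (simp add: cay_adj_def)
  then show "Rel (i,j) (i',j')"
  proof
    assume "\<exists>s\<in>S. (i',j') = s \<otimes>\<^bsub>U n\<^esub> (i,j)"
    then obtain s where "s \<in> Sx n" "(i',j') = s \<otimes>\<^bsub>U n\<^esub> (i,j)" using assms(5) by blast
    then show ?thesis using left_adj1[OF assms(1-4)] by blast
  next
    assume "\<exists>s\<in>S. (i,j) = s \<otimes>\<^bsub>U n\<^esub> (i',j')"
    then obtain s where "s \<in> Sx n" "(i,j) = s \<otimes>\<^bsub>U n\<^esub> (i',j')" using assms(5) by blast
    then have "Rel (i',j') (i,j)" using left_adj1[OF assms(3,4,1,2)] by blast
    then show ?thesis using Rel_sym by blast
  qed
next
  assume "Rel (i,j) (i',j')"
  then obtain s where "s \<in> S" "(i',j') = s \<otimes>\<^bsub>U n\<^esub> (i,j)" using left_adj2[OF assms(1-4)] assms(5) by blast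
  moreover have "(i,j) \<in> carrier (U n)" "(i',j') \<in> carrier (U n)" using assms(1-4) by (auto simp: carrier_U)
  ultimately show "cay_adj (U n) S (i,j) (i',j')" unfolding cay_adj_def by blast
qed

lemma m6: "(p::nat) mod 6 = p mod 3 + 3 * (p div 3 mod 2)"
  using mod_mult2_eq[of p 3 2] by (simp add: mult.commute)
lemma aux6: "(a::nat) < 3 \<Longrightarrow> (a + 3*b) div 3 = b \<and> (a + 3*b) mod 3 = a" by simp
lemma m6b: "(p::nat) mod 6 div 3 = p div 3 mod 2" "(p::nat) mod 6 mod 3 = p mod 3"
  by (subst m6; simp add: aux6)+
lemma m6c: "(p mod 6 div 3 = 0) = even (p div 3)" "(p mod 6 div 3 = 1) = odd (p div 3)" for p :: nat
  by (simp_all add: m6b even_iff_mod_2_eq_zero odd_iff_mod_2_eq_one)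

lemma vertex_char:
  assumes "p < 6*n" "q < 6*n"
  shows "Rel (U_vertex p) (U_vertex q) \<longleftrightarrow> p \<noteq> q \<and> Bf (p mod 6) (q mod 6)"
proof -
  have a: "((p div 3, p mod 3) \<noteq> (q div 3, q mod 3)) = (p \<noteq> q)" by (metis div_mult_mod_eq prod.inject)
  have f: "(p mod 6 div 3 = 0) = even (p div 3)" "(q mod 6 div 3 = 0) = even (q div 3)"
    "(p mod 6 div 3 = 1) = odd (p div 3)" "(q mod 6 div 3 = 1) = odd (q div 3)"
    "(p mod 6 div 3 = q mod 6 div 3) = (even (p div 3) = even (q div 3))"
    "p mod 6 mod 3 = p mod 3" "q mod 6 mod 3 = q mod 3"
    by (simp_all add: m6b m6c mod2_eq_if)
  have R: "Rel (U_vertex p) (U_vertex q) = ((p \<noteq> q) \<and>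
    ((even (p div 3) = even (q div 3) \<and> p mod 3 = q mod 3) \<or> (even (p div 3) \<and> odd (q div 3) \<and> (q mod 3 = p mod 3 \<or> q mod 3 = (p mod 3+1) mod 3))
      \<or> (odd (p div 3) \<and> even (q div 3) \<and> (p mod 3 = q mod 3 \<or> p mod 3 = (q mod 3+1) mod 3))))"
    unfolding U_vertex_def Rel_def prod.case a ..
  have B: "Bf (p mod 6) (q mod 6) = ((even (p div 3) = even (q div 3) \<and> p mod 3 = q mod 3) \<or> (even (p div 3) \<and> odd (q div 3) \<and> (q mod 3 = p mod 3 \<or> q mod 3 = (p mod 3+1) mod 3))
      \<or> (odd (p div 3) \<and> even (q div 3) \<and> (p mod 3 = q mod 3 \<or> p mod 3 = (q mod 3+1) mod 3)))"
    unfolding Bf_def Let_def f ..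
  show ?thesis unfolding R B ..
qed



definition K :: "nat \<Rightarrow> (nat\<Rightarrow>nat\<Rightarrow>complex) \<Rightarrow> (nat\<Rightarrow>nat\<Rightarrow>complex) \<Rightarrow> complex mat" where
 "K n f g = mat (6*n) (6*n) (\<lambda>(p,q). f (p div 6) (q div 6) * g (p mod 6) (q mod 6))"

lemma K_carrier[simp]: "K n f g \<in> carrier_mat (6*n) (6*n)"
  by (simp add: K_def)

lemma sum6: "(\<Sum>k<6*(n::nat). h k) = (\<Sum>j<n. \<Sum>b<6. h (6*j+b))"
proof -
  have "(\<Sum>k<6*n. h k) = (\<Sum>j<n. sum h {j*6..<j*6+6})"
    using sum.nat_group[of h 6 n] by (simp add: mult.commute)
  also have "\<dots> = (\<Sum>j<n. \<Sum>b<6. h (6*j+b))"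
  proof (rule sum.cong[OF refl])
    fix j
    have "sum h {j*6..<j*6+6} = sum (\<lambda>b. h (b + j*6)) {0..<6}"
      using sum.shift_bounds_nat_ivl[of h 0 "j*6" 6] by (simp add: add.commute)
    then show "sum h {j*6..<j*6+6} = (\<Sum>b<6. h (6*j+b))"
      by (simp add: atLeast0LessThan add.commute mult.commute)
  qed
  finally show ?thesis .
qed

lemma K_mult: "K n f g * K n f' g' = K n (\<lambda>i k. \<Sum>j<n. f i j * f' j k) (\<lambda>a c. \<Sum>b<6. g a b * g' b c)"
proof (rule eq_matI)
  fix p q assume p: "p < dim_row (K n (\<lambda>i k. \<Sum>j<n. f i j * f' j k) (\<lambda>a c. \<Sum>b<6. g a b * g' b c))"
    and q: "q < dim_col (K n (\<lambda>i k. \<Sum>j<n. f i j * f' j k) (\<lambda>a c. \<Sum>b<6. g a b * g' b c))"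
  from p q have p': "p < 6*n" and q': "q < 6*n" by (auto simp: K_def)
  have "(K n f g * K n f' g') $$ (p,q) = (\<Sum>k<6*n. (f (p div 6) (k div 6) * g (p mod 6) (k mod 6)) * (f' (k div 6) (q div 6) * g' (k mod 6) (q mod 6)))"
    using p' q' by (simp add: K_def scalar_prod_def atLeast0LessThan)
  also have "\<dots> = (\<Sum>j<n. \<Sum>b<6. (f (p div 6) j * g (p mod 6) b) * (f' j (q div 6) * g' b (q mod 6)))"
    by (subst sum6) simp
  also have "\<dots> = (\<Sum>j<n. f (p div 6) j * f' j (q div 6)) * (\<Sum>b<6. g (p mod 6) b * g' b (q mod 6))"
    by (simp add: sum_product algebra_simps)
  finally show "(K n f g * K n f' g') $$ (p,q) = K n (\<lambda>i k. \<Sum>j<n. f i j * f' j k) (\<lambda>a c. \<Sum>b<6. g a b * g' b c) $$ (p,q)"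
    using p' q' by (simp add: K_def)
qed (auto simp: K_def)

lemma K_cong: "(\<And>i k. i < n \<Longrightarrow> k < n \<Longrightarrow> f i k = f' i k) \<Longrightarrow> (\<And>a c. a < 6 \<Longrightarrow> c < 6 \<Longrightarrow> g a c = g' a c)
  \<Longrightarrow> K n f g = K n f' g'"
  unfolding K_def by (rule eq_matI) (auto simp: less_mult_imp_div_less)

lemma K_one: "K n (\<lambda>i k. if i = k then 1 else 0) (\<lambda>a c. if a = c then 1 else 0) = 1\<^sub>m (6*n)"
proof (rule eq_matI)
  fix p q assume "p < dim_row (1\<^sub>m (6 * n))" "q < dim_col (1\<^sub>m (6 * n))"
  then have "p < 6*n" "q<6*n" by auto
  moreover have "(p div 6 = q div 6 \<and> p mod 6 = q mod 6) = (p = q)"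
    by (metis div_mult_mod_eq)
  ultimately show "K n (\<lambda>i k. if i = k then 1 else 0) (\<lambda>a c. if a = c then 1 else 0) $$ (p, q) = 1\<^sub>m (6 * n) $$ (p, q)"
    by (auto simp: K_def)
qed (auto simp: K_def)

definition Bm :: "nat \<Rightarrow> nat \<Rightarrow> complex" where "Bm a c = (if Bf a c then 1 else 0)"
definition Qm :: "nat \<Rightarrow> nat \<Rightarrow> complex" where "Qm a c = of_int ([[1, 2, 0, 2, 0, 1], [1, -1, 1, -1, -1, 1], [1, -1, -1, -1, 1, 1], [1, 1, -1, -1, -1, -1], [1, 1, 1, -1, 1, -1], [1, -2, 0, 2, 0, -1]] ! a ! c)"
definition Qim :: "nat \<Rightarrow> nat \<Rightarrow> complex" where "Qim a c = of_int ([[2,2,2,2,2,2],[2,-1,-1,1,1,-2],[0,3,-3,-3,3,0],[2,-1,-1,-1,-1,2],[0,-3,3,-3,3,0],[2,2,2,-2,-2,-2]] ! a ! c) / 12"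
definition dv :: "nat \<Rightarrow> int" where "dv a = [3,2,2,0,0,-1] ! a"

lemma six_cases: "a < (6::nat) \<longleftrightarrow> a = 0 \<or> a = 1 \<or> a = 2 \<or> a = 3 \<or> a = 4 \<or> a = 5" by auto
lemma sum_six: "(\<Sum>b<(6::nat). h b) = h 0 + h 1 + h 2 + h 3 + h 4 + (h 5::'a::comm_monoid_add)"
  by (simp add: eval_nat_numeral lessThan_Suc add.commute add.left_commute)

lemma QQi: "a < 6 \<Longrightarrow> c < 6 \<Longrightarrow> (\<Sum>b<6. Qm a b * Qim b c) = (if a = c then 1 else 0)"
  unfolding six_cases by (elim disjE; simp add: sum_six Qm_def Qim_def)
lemma QiQ: "a < 6 \<Longrightarrow> c < 6 \<Longrightarrow> (\<Sum>b<6. Qim a b * Qm b c) = (if a = c then 1 else 0)"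
  unfolding six_cases by (elim disjE; simp add: sum_six Qm_def Qim_def)
lemma QiBQ: "a < 6 \<Longrightarrow> c < 6 \<Longrightarrow> (\<Sum>b<6. (\<Sum>b'<6. Qim a b' * Bm b' b) * Qm b c) = (if a = c then of_int (dv a) else 0)"
  unfolding six_cases by (elim disjE; simp add: sum_six Qm_def Qim_def Bm_def Bf_def dv_def)


definition Wm :: "nat \<Rightarrow> nat \<Rightarrow> complex" where "Wm i k = (if i = k then 1 else 0) - (if i = 0 \<and> k \<noteq> 0 then 1 else 0)"
definition Wim :: "nat \<Rightarrow> nat \<Rightarrow> complex" where "Wim i k = (if i = k then 1 else 0) + (if i = 0 \<and> k \<noteq> 0 then 1 else 0)"

lemma H1: "0 < j \<Longrightarrow> Wm j k = (if j = k then 1 else 0)" "0 < j \<Longrightarrow> Wim j k = (if j = k then 1 else 0)"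
  by (auto simp: Wm_def Wim_def)
lemma H2: "Wm 0 k = (if k = 0 then 1 else -1)" "Wim 0 k = 1"
  by (auto simp: Wm_def Wim_def)

lemma sum_split0: "0 < n \<Longrightarrow> sum f {..<n} = f 0 + sum f {1..<(n::nat)}"
  by (simp add: lessThan_atLeast0 sum.atLeast_Suc_lessThan)

lemma sum_delta1: "(\<Sum>j\<in>{1..<(n::nat)}. if j = k then (c::complex) else 0) = (if 1 \<le> k \<and> k < n then c else 0)"
proof -
  have "(\<Sum>j\<in>{1..<n}. if j = k then c else 0) = (if k \<in> {1..<n} then c else 0)"
    by (rule sum.delta[OF finite_atLeastLessThan])
  then show ?thesis by simp
qed

lemma WWi: "i < n \<Longrightarrow> k < n \<Longrightarrow> (\<Sum>j<n. Wm i j * Wim j k) = (if i = k then 1 else 0)"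
proof (cases "i = 0")
  case True
  assume "i < n" "k < n"
  then have "(\<Sum>j<n. Wm i j * Wim j k) = Wm 0 0 * Wim 0 k + (\<Sum>j\<in>{1..<n}. Wm 0 j * Wim j k)"
    using True by (simp add: sum_split0)
  also have "(\<Sum>j\<in>{1..<n}. Wm 0 j * Wim j k) = (\<Sum>j\<in>{1..<n}. if j = k then -1 else 0)"
    by (rule sum.cong) (auto simp: H1 H2)
  finally show ?thesis using True \<open>k<n\<close> by (simp add: sum_delta1 H2)
next
  case False
  assume "i < n" "k < n"
  have "(\<Sum>j<n. Wm i j * Wim j k) = (\<Sum>j<n. if i = j then Wim j k else 0)"
    by (rule sum.cong) (use False in \<open>auto simp: H1\<close>)
  then show ?thesis using False \<open>i<n\<close> by (simp add: H1)
qed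

lemma WiW: "i < n \<Longrightarrow> k < n \<Longrightarrow> (\<Sum>j<n. Wim i j * Wm j k) = (if i = k then 1 else 0)"
proof (cases "i = 0")
  case True
  assume "i < n" "k < n"
  then have "(\<Sum>j<n. Wim i j * Wm j k) = Wim 0 0 * Wm 0 k + (\<Sum>j\<in>{1..<n}. Wim 0 j * Wm j k)"
    using True by (simp add: sum_split0)
  also have "(\<Sum>j\<in>{1..<n}. Wim 0 j * Wm j k) = (\<Sum>j\<in>{1..<n}. if j = k then 1 else 0)"
    by (rule sum.cong) (auto simp: H1 H2)
  finally show ?thesis using True \<open>k<n\<close> by (simp add: sum_delta1 H2)
next
  case False
  assume "i < n" "k < n"
  have "(\<Sum>j<n. Wim i j * Wm j k) = (\<Sum>j<n. if i = j then Wm j k else 0)"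
    by (rule sum.cong) (use False in \<open>auto simp: H1\<close>)
  then show ?thesis using False \<open>i<n\<close> by (simp add: H1)
qed

lemma WiJ: "i < n \<Longrightarrow> (\<Sum>j<n. Wim i j) = (if i = 0 then of_nat n else 1)"
proof (cases "i = 0")
  case True then show ?thesis by (simp add: H2)
next
  case False
  assume "i < n"
  have "(\<Sum>j<n. Wim i j) = (\<Sum>j<n. if i = j then 1 else 0)"
    by (rule sum.cong) (use False in \<open>auto simp: H1\<close>)
  then show ?thesis using False \<open>i<n\<close> by simp
qed

lemma sumW: "k < n \<Longrightarrow> (\<Sum>j<n. Wm j k) = (if k = 0 then 1 else 0)"
proof -
  assume "k < n"
  then have "(\<Sum>j<n. Wm j k) = Wm 0 k + (\<Sum>j\<in>{1..<n}. Wm j k)" by (simp add: sum_split0)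
  also have "(\<Sum>j\<in>{1..<n}. Wm j k) = (\<Sum>j\<in>{1..<n}. if j = k then 1 else 0)"
    by (rule sum.cong) (auto simp: H1)
  finally show ?thesis using \<open>k<n\<close> by (simp add: sum_delta1 H2)
qed

lemma WiJW: "i < n \<Longrightarrow> k < n \<Longrightarrow> (\<Sum>j<n. (\<Sum>j'<n. Wim i j' * 1) * Wm j k) = (if k = 0 then (if i = 0 then of_nat n else 1) else 0)"
  by (simp add: WiJ sum_distrib_left[symmetric] sumW)

lemma prod6: "(\<Prod>k<6*(n::nat). h k) = (\<Prod>j<n. \<Prod>b<6. h (6*j+b))"
proof -
  have "(\<Prod>k<6*n. h k) = (\<Prod>j<n. prod h {j*6..<j*6+6})"
    using prod.nat_group[of h 6 n] by (simp add: mult.commute)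
  also have "\<dots> = (\<Prod>j<n. \<Prod>b<6. h (6*j+b))"
  proof (rule prod.cong[OF refl])
    fix j
    have "prod h {j*6..<j*6+6} = prod (\<lambda>b. h (b + j*6)) {0..<6}"
      using prod.shift_bounds_nat_ivl[of h 0 "j*6" 6] by (simp add: add.commute)
    then show "prod h {j*6..<j*6+6} = (\<Prod>b<6. h (6*j+b))"
      by (simp add: atLeast0LessThan add.commute mult.commute)
  qed
  finally show ?thesis .
qed

lemma prod_six: "(\<Prod>b<(6::nat). h b) = h 0 * h 1 * h 2 * h 3 * h 4 * (h 5::'a::comm_monoid_mult)"
  by (simp add: eval_nat_numeral lessThan_Suc mult.commute mult.left_commute)

definition Lm :: "nat \<Rightarrow> nat \<Rightarrow> nat \<Rightarrow> complex" where
  "Lm n i k = (if k = 0 then (if i = 0 then of_nat n else 1) else 0)"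
definition Dm :: "nat \<Rightarrow> nat \<Rightarrow> complex" where
  "Dm a c = (if a = c then of_int (dv a) else 0)"

lemma U_vertex_bounds: "p < 6*n \<Longrightarrow> fst (U_vertex p) < 2*n \<and> snd (U_vertex p) < 3"
  by (auto simp: U_vertex_def)

lemma A_eq:
  assumes "0 < n" "S = Sx n"
  shows "U_adj_matrix n S = K n (\<lambda>_ _. 1) Bm - 1\<^sub>m (6*n)"
proof (rule eq_matI)
  fix p q assume "p < dim_row (K n (\<lambda>_ _. 1) Bm - 1\<^sub>m (6*n))" "q < dim_col (K n (\<lambda>_ _. 1) Bm - 1\<^sub>m (6*n))"
  then have p: "p < 6*n" and q: "q < 6*n" by auto
  have "cay_adj (U n) S (U_vertex p) (U_vertex q) \<longleftrightarrow> Rel (U_vertex p) (U_vertex q)"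
    using adj_char[of "p div 3" n "p mod 3" "q div 3" "q mod 3" S] p q assms(2)
    by (simp add: U_vertex_def less_mult_imp_div_less)
  also have "\<dots> \<longleftrightarrow> p \<noteq> q \<and> Bf (p mod 6) (q mod 6)" using vertex_char[OF p q] .
  finally have c: "cay_adj (U n) S (U_vertex p) (U_vertex q) \<longleftrightarrow> p \<noteq> q \<and> Bf (p mod 6) (q mod 6)" .
  have bb: "Bf c c" for c by (simp add: Bf_def Let_def)
  show "U_adj_matrix n S $$ (p, q) = (K n (\<lambda>_ _. 1) Bm - 1\<^sub>m (6*n)) $$ (p, q)"
    using p q c bb by (simp add: U_adj_matrix_def K_def Bm_def)
qed (auto simp: U_adj_matrix_def K_def)

lemma main_char_poly:
  assumes "0 < n" "S = Sx n"
  shows "char_poly (U_adj_matrix n S) =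
        [:of_int (int n + 1), 1:] ^ 1
      * [:1, 1:] ^ (6 * n - 4)
      * [:- of_int (2 * int n - 1), 1:] ^ 2
      * [:- of_int (3 * int n - 1), 1:] ^ 1"
proof -
  define A where "A = U_adj_matrix n S"
  define P where "P = K n Wm Qm"
  define Pi where "Pi = K n Wim Qim"
  define J where "J = K n (\<lambda>_ _. 1) Bm"
  define T where "T = K n (Lm n) Dm - 1\<^sub>m (6*n)"
  have cA: "A \<in> carrier_mat (6*n) (6*n)" unfolding A_def U_adj_matrix_def by (rule mat_carrier)
  have cP: "P \<in> carrier_mat (6*n) (6*n)" "Pi \<in> carrier_mat (6*n) (6*n)" "J \<in> carrier_mat (6*n) (6*n)"
    unfolding P_def Pi_def J_def by (rule K_carrier)+
  have cT: "T \<in> carrier_mat (6*n) (6*n)" unfolding T_def by (rule minus_carrier_mat) (rule one_carrier_mat)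
  have AJ: "A = J - 1\<^sub>m (6*n)" unfolding A_def J_def by (rule A_eq[OF assms])
  have PPi: "P * Pi = 1\<^sub>m (6*n)"
  proof -
    have "P * Pi = K n (\<lambda>i k. if i = k then 1 else 0) (\<lambda>a c. if a = c then 1 else 0)"
      unfolding P_def Pi_def K_mult by (rule K_cong) (simp_all add: WWi QQi)
    then show ?thesis by (simp add: K_one)
  qed
  have PiP: "Pi * P = 1\<^sub>m (6*n)"
  proof -
    have "Pi * P = K n (\<lambda>i k. if i = k then 1 else 0) (\<lambda>a c. if a = c then 1 else 0)"
      unfolding P_def Pi_def K_mult by (rule K_cong) (simp_all add: WiW QiQ)
    then show ?thesis by (simp add: K_one)
  qed
  have PiJP: "Pi * J * P = K n (Lm n) Dm"
    unfolding P_def Pi_def J_def K_mult by (rule K_cong) (simp_all only: WiJW QiBQ Lm_def Dm_def)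
  have TT: "T = Pi * A * P"
  proof -
    have "Pi * A * P = (Pi * J - Pi * 1\<^sub>m (6*n)) * P"
      unfolding AJ using cP by (simp add: mult_minus_distrib_mat[of _ "6*n" "6*n"])
    also have "\<dots> = Pi * J * P - Pi * 1\<^sub>m (6*n) * P"
      using cP by (intro minus_mult_distrib_mat[of _ "6*n" "6*n"]) auto
    also have "Pi * 1\<^sub>m (6*n) * P = 1\<^sub>m (6*n)" using cP PiP by simp
    finally show ?thesis using PiJP by (simp add: T_def)
  qed
  have sim: "similar_mat A T"
  proof -
    have "P * T * Pi = (P * Pi) * A * (P * Pi)"
      unfolding TT using cP cA by (simp add: assoc_mult_mat[of _ "6*n" "6*n" _ "6*n" _ "6*n"])
    then have "A = P * T * Pi" using PPi cA by simp
    then show ?thesis unfolding similar_mat_def similar_mat_wit_def Let_def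
      using cA cT cP PPi PiP by (intro exI[of _ P] exI[of _ Pi]) auto
  qed
  have ut: "upper_triangular (transpose_mat T)"
    unfolding upper_triangular_def
  proof (intro allI impI)
    fix i j assume i: "i < dim_row (transpose_mat T)" and ji: "j < i"
    then have i': "i < 6*n" using cT by simp
    have j': "j < 6*n" using i' ji by simp
    have "transpose_mat T $$ (i,j) = T $$ (j,i)" using i' j' cT by simp
    also have "\<dots> = Lm n (j div 6) (i div 6) * Dm (j mod 6) (i mod 6)"
      using i' j' ji by (simp add: T_def K_def)
    also have "\<dots> = 0"
    proof (cases "i div 6 = 0")
      case True
      then have "j mod 6 \<noteq> i mod 6" using ji by simp
      then show ?thesis by (simp add: Dm_def)
    qed (simp add: Lm_def)
    finally show "transpose_mat T $$ (i,j) = 0" .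
  qed
  have diagT: "T $$ (i,i) = (if i div 6 = 0 then of_nat n * of_int (dv (i mod 6)) else 0) - 1" if "i < 6*n" for i
    using that by (simp add: T_def K_def Lm_def Dm_def)
  have "char_poly A = char_poly T" using char_poly_similar[OF sim] .
  also have "\<dots> = char_poly (transpose_mat T)" using cT by simp
  also have "\<dots> = (\<Prod>a\<leftarrow>diag_mat (transpose_mat T). [:- a, 1:])"
    by (rule char_poly_upper_triangular[of _ "6*n"]) (use cT ut in auto)
  also have "\<dots> = (\<Prod>i\<leftarrow>[0..<6*n]. [:- (T $$ (i,i)), 1:])"
    unfolding diag_mat_def map_map comp_def using cT
    by (intro arg_cong[where f=prod_list] map_cong) auto
  also have "\<dots> = (\<Prod>i<6*n. [:- (T $$ (i,i)), 1:])"
    by (simp add: prod.distinct_set_conv_list[symmetric] atLeast0LessThan)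
  also have "\<dots> = (\<Prod>j<n. \<Prod>b<6. [:- (T $$ (6*j+b,6*j+b)), 1:])" by (rule prod6)
  also have "\<dots> = (\<Prod>j<n. \<Prod>b<6. [:- ((if j = 0 then of_nat n * of_int (dv b) else 0) - 1), 1:])"
  proof (intro prod.cong refl)
    fix j b assume "j \<in> {..<n}" "b \<in> {..<6::nat}"
    then have "6*j+b < 6*n" "(6*j+b) div 6 = j" "(6*j+b) mod 6 = b" by auto
    then show "[:- (T $$ (6*j+b,6*j+b)), 1:] = [:- ((if j = 0 then of_nat n * of_int (dv b) else 0) - 1), 1:]"
      using diagT by simp
  qed
  also have "\<dots> = (\<Prod>b<6. [:- ((if 0 = (0::nat) then of_nat n * of_int (dv b) else 0) - 1), 1:]) *
       (\<Prod>j\<in>{1..<n}. \<Prod>b<6. [:- ((if j = 0 then of_nat n * of_int (dv b) else 0) - 1), 1:])"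
    using assms(1) by (simp only: lessThan_atLeast0 prod.atLeast_Suc_lessThan One_nat_def)
  also have "(\<Prod>b<6. [:- ((if 0 = (0::nat) then of_nat n * of_int (dv b) else 0) - 1), 1:]) =
     (\<Prod>b<6. [:1 - of_nat n * of_int (dv b), 1::complex:])"
    by (intro prod.cong refl) simp
  also have "(\<Prod>j\<in>{1..<n}. \<Prod>b<6. [:- ((if j = 0 then of_nat n * of_int (dv b) else 0) - 1), 1:]) =
     (\<Prod>j\<in>{1..<n}. \<Prod>b<(6::nat). [:1, 1::complex:])"
    by (intro prod.cong refl) simp
  also have "(\<Prod>j\<in>{1..<n}. \<Prod>b<(6::nat). [:1, 1:]) = ([:1,1:] :: complex poly) ^ (6 * (n - 1))"
    by (simp add: power_mult)
  also have "(\<Prod>b<6. [:1 - of_nat n * of_int (dv b), 1:]) * ([:1,1:] :: complex poly) ^ (6 * (n - 1)) =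
        [:of_int (int n + 1), 1:] ^ 1
      * [:1, 1:] ^ (6 * n - 4)
      * [:- of_int (2 * int n - 1), 1:] ^ 2
      * [:- of_int (3 * int n - 1), 1:] ^ 1"
  proof -
    have e: "6 * n - 4 = Suc (Suc (6 * (n - 1)))" using assms(1) by simp
    have p0: "[:1 - of_nat n * of_int (dv 0), 1:] = [:- of_int (3 * int n - 1), 1::complex:]" by (simp add: dv_def)
    have p1: "[:1 - of_nat n * of_int (dv 1), 1:] = [:- of_int (2 * int n - 1), 1::complex:]" by (simp add: dv_def)
    have p2: "[:1 - of_nat n * of_int (dv 2), 1:] = [:- of_int (2 * int n - 1), 1::complex:]" by (simp add: dv_def)
    have p3: "[:1 - of_nat n * of_int (dv 3), 1:] = [:1, 1::complex:]" by (simp add: dv_def)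
    have p4: "[:1 - of_nat n * of_int (dv 4), 1:] = [:1, 1::complex:]" by (simp add: dv_def)
    have p5: "[:1 - of_nat n * of_int (dv 5), 1:] = [:of_int (int n + 1), 1::complex:]" by (simp add: dv_def)
    have gen: "a * b * b * c * c * d * c ^ m = d ^ 1 * c ^ (Suc (Suc m)) * b ^ 2 * a ^ 1"
      for a b c d :: "complex poly" and m by (simp add: power2_eq_square mult_ac)
    show ?thesis unfolding prod_six p0 p1 p2 p3 p4 p5 e by (rule gen)
  qed
  finally show ?thesis by (simp add: A_def)
qed

lemma adj_sym: "cay_adj G S g h = cay_adj G S h g"
  unfolding cay_adj_def by blast

lemma rtr2: "(a,b) \<in> R \<Longrightarrow> (b,c) \<in> R \<Longrightarrow> (a,c) \<in> R\<^sup>*"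
  by (rule rtrancl_trans[OF r_into_rtrancl r_into_rtrancl])

lemma connected:
  assumes "0 < n" "S = Sx n"
  shows "cay_connected (U n) S"
proof -
  define R where "R = {(x, y). cay_adj (U n) S x y}"
  have adj: "((i,j),(i',j')) \<in> R" if "i < 2*n" "j < 3" "i' < 2*n" "j' < 3" "Rel (i,j) (i',j')" for i j i' j'
    using adj_char[OF that(1-4) assms(2)] that(5) unfolding R_def by simp
  have symR: "sym R"
  proof (rule symI)
    fix a b assume "(a,b) \<in> R"
    then show "(b,a) \<in> R" unfolding R_def using adj_sym[of "U n" S a b] by simp
  qed
  have one: "1 < 2*n" using assms(1) by simp
  have r1: "Rel (0,0) (1,1)" "Rel (1,1) (0,1)" "Rel (0,1) (1,2)" "Rel (1,2) (0,2)" by (simp_all add: Rel_def)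
  have s01: "((0,0),(0,1)) \<in> R\<^sup>*"
    by (rule rtr2[OF adj[OF _ _ one _ r1(1)] adj[OF one _ _ _ r1(2)]]) (use one in simp_all)
  have s12: "((0,1),(0,2)) \<in> R\<^sup>*"
    by (rule rtr2[OF adj[OF _ _ one _ r1(3)] adj[OF one _ _ _ r1(4)]]) (use one in simp_all)
  have base: "((0,0),(0,j)) \<in> R\<^sup>*" if "j < 3" for j
  proof -
    have "j = 0 \<or> j = 1 \<or> j = 2" using that by auto
    moreover have "((0,0),(0,2)) \<in> R\<^sup>*" using s01 s12 by (rule rtrancl_trans)
    ultimately show ?thesis using s01 by auto
  qed
  have reach: "((0,0),(i,j)) \<in> R\<^sup>*" if "i < 2*n" "j < 3" for i j
  proof (cases "i = 0")
    case True then show ?thesis using base that by simp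
  next
    case False
    have "Rel (0,j) (i,j)" using False by (simp add: Rel_def)
    then have "((0,j),(i,j)) \<in> R" using that one by (intro adj) simp_all
    then show ?thesis using base[OF that(2)] by (rule rtrancl_into_rtrancl[rotated])
  qed
  have symRs: "sym (R\<^sup>*)" using sym_rtrancl[OF symR] .
  show ?thesis unfolding cay_connected_def
  proof (intro ballI)
    fix g h assume g: "g \<in> carrier (U n)" and h: "h \<in> carrier (U n)"
    obtain i j where gi: "g = (i,j)" "i < 2*n" "j < 3" using g by (auto simp: carrier_U)
    obtain i' j' where hi: "h = (i',j')" "i' < 2*n" "j' < 3" using h by (auto simp: carrier_U)
    have "((0,0), g) \<in> R\<^sup>*" using reach[OF gi(2,3)] gi(1) by simp
    then have "(g, (0,0)) \<in> R\<^sup>*" using symRs by (rule symD[rotated])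
    moreover have "((0,0), h) \<in> R\<^sup>*" using reach[OF hi(2,3)] hi(1) by simp
    ultimately have "(g, h) \<in> R\<^sup>*" by (rule rtrancl_trans)
    then show "(g, h) \<in> {(x, y). cay_adj (U n) S x y}\<^sup>*" unfolding R_def .
  qed
qed

theorem corollary4p2:
  fixes n :: nat and S1 S2 S :: "(nat \<times> nat) set"
  assumes "n > 1"
    and "S1 = {gen_a [^]\<^bsub>U n\<^esub> (2 * k) | k. k \<in> (UNIV :: nat set)} - {\<one>\<^bsub>U n\<^esub>}"
    and "S2 = {gen_a [^]\<^bsub>U n\<^esub> (2 * r + 1) | r. r \<le> n - 1}
            \<union> {gen_a [^]\<^bsub>U n\<^esub> (2 * r + 1) \<otimes>\<^bsub>U n\<^esub> gen_b | r. r \<le> n - 1}"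
    and "S = S1 \<union> S2"
  shows "cay_connected (U n) S
    \<and> (\<forall>x. eigenvalue (U_adj_matrix n S) x \<longrightarrow> x \<in> \<int>)
    \<and> char_poly (U_adj_matrix n S) =
        [:of_int (int n + 1), 1:] ^ 1
      * [:1, 1:] ^ (6 * n - 4)
      * [:- of_int (2 * int n - 1), 1:] ^ 2
      * [:- of_int (3 * int n - 1), 1:] ^ 1"
proof -
  have Sx: "S = Sx n" using S_eq[OF assms] by (simp add: Sx_def)
  have n0: "0 < n" using assms(1) by simp
  have cp: "char_poly (U_adj_matrix n S) =
        [:of_int (int n + 1), 1:] ^ 1
      * [:1, 1:] ^ (6 * n - 4)
      * [:- of_int (2 * int n - 1), 1:] ^ 2
      * [:- of_int (3 * int n - 1), 1:] ^ 1" by (rule main_char_poly[OF n0 Sx])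
  have ev: "x \<in> \<int>" if "eigenvalue (U_adj_matrix n S) x" for x
  proof -
    have cA: "U_adj_matrix n S \<in> carrier_mat (6*n) (6*n)" unfolding U_adj_matrix_def by (rule mat_carrier)
    have "poly (char_poly (U_adj_matrix n S)) x = 0"
      using eigenvalue_root_char_poly[OF cA] that by simp
    then have "(of_int (int n + 1) + x * (1 + x * 0)) = 0 \<or> (1 + x * (1 + x * 0)) = 0 \<or> (- of_int (2 * int n - 1) + x * (1 + x * 0)) = 0 \<or> (- of_int (3 * int n - 1) + x * (1 + x * 0)) = 0"
      unfolding cp by (simp only: poly_mult poly_power poly_pCons poly_0 mult_eq_0_iff power_eq_0_iff power_one_right) blast
    then have "x + of_int (int n + 1) = 0 \<or> x + 1 = 0 \<or> x - of_int (2 * int n - 1) = 0 \<or> x - of_int (3 * int n - 1) = 0"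
      by (simp add: algebra_simps)
    then show ?thesis
      by (metis Ints_minus Ints_of_int Ints_1 add_eq_0_iff eq_iff_diff_eq_0 minus_equation_iff add.commute)
  qed
  show ?thesis using connected[OF n0 Sx] ev cp by blast
qed

end
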